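(* Let $S=s_1,\ldots,s_n$ be a sequence of positive real numbers, $\gamma>0$, $k$ a positive integer. Let $(L,\alpha,\beta)$ be an optimal solution of $\textsc{Exp}$ for $S,\gamma,k$. Let $g=(\prod_{i=1}^ns_i)^{1/n}$ and $\psi=n\log g$. Let $\epsilon_1,\epsilon_2>0$ and let $\alpha',\beta'$ satisfy $\beta\le\beta'\le\beta(1+\epsilon_1)$ and $\alpha\le\alpha'\le\alpha(1+\epsilon_2)$. Then \[ \mathrm{score}_{\exp}(L,S;\alpha',\beta',\gamma)-\psi\le c\,\big(\mathrm{score}_{\exp}(L,S;\alpha,\beta,\gamma)-\psi\big),\qquad c=(1+\epsilon_1)(1+\epsilon_2)^k. \]
   Context: A level sequence is $L=\ell_1,\ldots,\ell_n$ of integers with $0\le\ell_i\le k$; set $\ell_0=0$. The penalty is $\mathrm{pen}(x,y)=\max(y-x,0)\,\gamma\log n$; $p_{\exp}(s;\lambda)=\lambda e^{-\lambda s}$; $\mathrm{score}_{\exp}(L,S;\alpha,\beta,\gamma)=\sum_{i=1}^n\big[-\log p_{\exp}(s_i;\beta\alpha^{\ell_i})+\mathrm{pen}(\ell_{i-1},\ell_i)\big]$. Problem $\textsc{Exp}$: given $S,\gamma,k$, find $L$ and parameters $\alpha>1$, $\beta>0$ minimizing this score. The paper assumes $s_i>0$ for this problem. *)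

theory Defs
  imports Complex_Main
begin

text \<open>Sequences S = s_1..s_n and level sequences L = l_1..l_n are modelled as functions
  on nat, only their values at indices 1..n matter. The convention l_0 = 0 is built in.\<close>

definition lev :: "(nat \<Rightarrow> nat) \<Rightarrow> nat \<Rightarrow> nat" where
  "lev L i = (if i = 0 then 0 else L i)"

definition level_seq :: "nat \<Rightarrow> nat \<Rightarrow> (nat \<Rightarrow> nat) \<Rightarrow> bool" where
  "level_seq n k L \<longleftrightarrow> (\<forall>i\<in>{1..n}. L i \<le> k)"

definition pen :: "nat \<Rightarrow> real \<Rightarrow> nat \<Rightarrow> nat \<Rightarrow> real" where
  "pen n \<gamma> x y = max (real y - real x) 0 * \<gamma> * ln (real n)"

definition p_exp :: "real \<Rightarrow> real \<Rightarrow> real" where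
  "p_exp s lam = lam * exp (- lam * s)"

definition score_exp ::
  "nat \<Rightarrow> (nat \<Rightarrow> nat) \<Rightarrow> (nat \<Rightarrow> real) \<Rightarrow> real \<Rightarrow> real \<Rightarrow> real \<Rightarrow> real" where
  "score_exp n L S \<alpha> \<beta> \<gamma> =
     (\<Sum>i=1..n. - ln (p_exp (S i) (\<beta> * \<alpha> ^ lev L i)) + pen n \<gamma> (lev L (i - 1)) (lev L i))"

definition exp_optimal ::
  "nat \<Rightarrow> (nat \<Rightarrow> real) \<Rightarrow> real \<Rightarrow> nat \<Rightarrow> (nat \<Rightarrow> nat) \<Rightarrow> real \<Rightarrow> real \<Rightarrow> bool" where
  "exp_optimal n S \<gamma> k L \<alpha> \<beta> \<longleftrightarrow>
     level_seq n k L \<and> \<alpha> > 1 \<and> \<beta> > 0 \<and>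
     (\<forall>L' \<alpha>' \<beta>'. level_seq n k L' \<and> \<alpha>' > 1 \<and> \<beta>' > 0 \<longrightarrow>
        score_exp n L S \<alpha> \<beta> \<gamma> \<le> score_exp n L' S \<alpha>' \<beta>' \<gamma>)"

end

theory Submission
  imports Defs
begin

lemma term_eq:
  fixes y s :: real assumes "y > 0" "s > 0"
  shows "- ln (p_exp s y) = y * s - ln (y * s) + ln s"
proof -
  have "ln (p_exp s y) = ln y + (- y * s)"
    unfolding p_exp_def using assms by (simp add: ln_mult)
  moreover have "ln (y * s) = ln y + ln s" using assms by (simp add: ln_mult)
  ultimately show ?thesis by simp
qed

lemma decomp:
  assumes S: "\<forall>i\<in>{1..n}. S i > 0" and a: "a > 0" and b: "b > 0"
  shows "score_exp n L S a b \<gamma> =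
    (\<Sum>i=1..n. b * a ^ lev L i * S i - ln (b * a ^ lev L i * S i))
    + (\<Sum>i=1..n. ln (S i)) + (\<Sum>i=1..n. pen n \<gamma> (lev L (i - 1)) (lev L i))"
proof -
  have "\<And>i. i \<in> {1..n} \<Longrightarrow> - ln (p_exp (S i) (b * a ^ lev L i)) =
     (b * a ^ lev L i * S i - ln (b * a ^ lev L i * S i)) + ln (S i)"
    using term_eq S a b by simp
  then have "score_exp n L S a b \<gamma> = (\<Sum>i=1..n. (b * a ^ lev L i * S i - ln (b * a ^ lev L i * S i)) + ln (S i)
       + pen n \<gamma> (lev L (i - 1)) (lev L i))"
    unfolding score_exp_def by (intro sum.cong) auto
  then show ?thesis by (simp add: sum.distrib)
qed

theorem lemma10:
  fixes n k :: nat and S :: "nat \<Rightarrow> real" and \<gamma> \<alpha> \<beta> \<alpha>' \<beta>' \<epsilon>\<^sub>1 \<epsilon>\<^sub>2 :: real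
    and L :: "nat \<Rightarrow> nat"
  assumes "\<forall>i\<in>{1..n}. S i > 0"
    and "\<gamma> > 0" and "k \<ge> 1"
    and "exp_optimal n S \<gamma> k L \<alpha> \<beta>"
    and "\<epsilon>\<^sub>1 > 0" and "\<epsilon>\<^sub>2 > 0"
    and "\<beta> \<le> \<beta>'" and "\<beta>' \<le> \<beta> * (1 + \<epsilon>\<^sub>1)"
    and "\<alpha> \<le> \<alpha>'" and "\<alpha>' \<le> \<alpha> * (1 + \<epsilon>\<^sub>2)"
  shows "let g = (\<Prod>i=1..n. S i) powr (1 / real n);
             \<psi> = real n * ln g;
             c = (1 + \<epsilon>\<^sub>1) * (1 + \<epsilon>\<^sub>2) ^ k
         in score_exp n L S \<alpha>' \<beta>' \<gamma> - \<psi> \<le> c * (score_exp n L S \<alpha> \<beta> \<gamma> - \<psi>)"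
proof -
  note S = assms(1)
  have opt: "level_seq n k L" "\<alpha> > 1" "\<beta> > 0"
    and optall: "\<And>L' a' b'. level_seq n k L' \<Longrightarrow> a' > 1 \<Longrightarrow> b' > 0 \<Longrightarrow>
        score_exp n L S \<alpha> \<beta> \<gamma> \<le> score_exp n L' S a' b' \<gamma>"
    using assms(4) unfolding exp_optimal_def by blast+
  define c where "c = (1 + \<epsilon>\<^sub>1) * (1 + \<epsilon>\<^sub>2) ^ k"
  define x where "x i = \<beta> * \<alpha> ^ lev L i * S i" for i
  define x' where "x' i = \<beta>' * \<alpha>' ^ lev L i * S i" for i
  define P where "P = (\<Sum>i=1..n. pen n \<gamma> (lev L (i - 1)) (lev L i))"
  define Q where "Q = (\<Sum>i=1..n. ln (S i))"
  define A where "A = (\<Sum>i=1..n. x i)"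
  have p1: "1 \<le> (1 + \<epsilon>\<^sub>2) ^ k" using assms(6) by simp
  have "1 * (1 + \<epsilon>\<^sub>2) ^ k \<le> (1 + \<epsilon>\<^sub>1) * (1 + \<epsilon>\<^sub>2) ^ k"
    using p1 assms(5) by (intro mult_right_mono) auto
  then have c1: "c \<ge> 1" unfolding c_def using p1 by linarith
  have xpos: "\<And>i. i \<in> {1..n} \<Longrightarrow> x i > 0" unfolding x_def using S opt by simp
  have x'ge: "x i \<le> x' i" if i: "i \<in> {1..n}" for i
  proof -
    have "\<alpha> ^ lev L i \<le> \<alpha>' ^ lev L i" using opt assms(9) by (intro power_mono) auto
    then have "\<beta> * \<alpha> ^ lev L i \<le> \<beta>' * \<alpha>' ^ lev L i" using opt assms(7)
      by (intro mult_mono) auto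
    then show ?thesis unfolding x_def x'_def using less_imp_le[OF bspec[OF S i]] by (intro mult_right_mono) auto
  qed
  have x'le: "x' i \<le> c * x i" if i: "i \<in> {1..n}" for i
  proof -
    have lk: "lev L i \<le> k" using opt(1) i unfolding level_seq_def lev_def by auto
    have "\<alpha>' ^ lev L i \<le> (\<alpha> * (1 + \<epsilon>\<^sub>2)) ^ lev L i" using opt assms(9,10) by (intro power_mono) auto
    also have "\<dots> = \<alpha> ^ lev L i * (1 + \<epsilon>\<^sub>2) ^ lev L i" by (simp add: power_mult_distrib)
    also have "\<dots> \<le> \<alpha> ^ lev L i * (1 + \<epsilon>\<^sub>2) ^ k"
      using lk assms(6) opt by (intro mult_left_mono power_increasing) auto
    finally have h1: "\<alpha>' ^ lev L i \<le> \<alpha> ^ lev L i * (1 + \<epsilon>\<^sub>2) ^ k" .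
    have "\<beta>' * \<alpha>' ^ lev L i \<le> (\<beta> * (1 + \<epsilon>\<^sub>1)) * (\<alpha> ^ lev L i * (1 + \<epsilon>\<^sub>2) ^ k)"
      using h1 assms(8) opt assms(7,9) by (intro mult_mono) auto
    also have "\<dots> = c * (\<beta> * \<alpha> ^ lev L i)" unfolding c_def by simp
    finally have "\<beta>' * \<alpha>' ^ lev L i * S i \<le> c * (\<beta> * \<alpha> ^ lev L i) * S i"
      using less_imp_le[OF bspec[OF S i]] by (intro mult_right_mono) auto
    then show ?thesis unfolding x_def x'_def by (simp add: mult.assoc)
  qed
  have Pnn: "P \<ge> 0" unfolding P_def pen_def
    using assms(2) by (intro sum_nonneg mult_nonneg_nonneg) auto
  have sc: "score_exp n L S \<alpha> \<beta> \<gamma> = (\<Sum>i=1..n. x i - ln (x i)) + Q + P"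
    unfolding x_def Q_def P_def using decomp[OF S] opt by simp
  have sc': "score_exp n L S \<alpha>' \<beta>' \<gamma> = (\<Sum>i=1..n. x' i - ln (x' i)) + Q + P"
    unfolding x'_def Q_def P_def using decomp[OF S] opt assms(7,9) by simp
  have An: "A \<le> real n"
  proof (rule ccontr)
    assume "\<not> A \<le> real n"
    then have An: "A > real n" by simp
    define t where "t = (1 + real n / A) / 2"
    have Apos: "A > 0" using An by linarith
    have t0: "t > 0" unfolding t_def using Apos by (simp add: add_pos_nonneg)
    have "real n / A < 1" using An Apos by simp
    then have t1: "t < 1" unfolding t_def by simp
    have tA: "t * A = (A + real n) / 2" unfolding t_def using Apos by (simp add: field_simps)
    have "score_exp n L S \<alpha> \<beta> \<gamma> \<le> score_exp n L S \<alpha> (t * \<beta>) \<gamma>"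
      using optall[OF opt(1) opt(2)] t0 opt by simp
    also have "score_exp n L S \<alpha> (t * \<beta>) \<gamma> = (\<Sum>i=1..n. t * x i - ln (t * x i)) + Q + P"
      unfolding x_def Q_def P_def using decomp[OF S, of \<alpha> "t * \<beta>"] opt t0
      by (simp add: mult.assoc)
    also have "(\<Sum>i=1..n. t * x i - ln (t * x i)) = (\<Sum>i=1..n. t * x i - ln t - ln (x i))"
      using xpos t0 by (intro sum.cong) (auto simp: ln_mult less_imp_neq[symmetric])
    also have "\<dots> = t * A - real n * ln t - (\<Sum>i=1..n. ln (x i))"
      unfolding A_def by (simp add: sum_subtractf sum_distrib_left)
    finally have "A \<le> t * A - real n * ln t"
      unfolding sc A_def by (simp add: sum_subtractf)
    moreover have "- ln t \<le> 1 / t - 1"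
      using ln_le_minus_one[of "1 / t"] t0 by (simp add: ln_div)
    moreover have "real n * (- ln t) \<le> real n * (1 / t - 1)"
      using calculation(2) by (rule mult_left_mono) simp
    ultimately have "A \<le> t * A + real n * (1 / t - 1)"
      by simp
    then have "t * A \<le> t * (t * A + real n * (1 / t - 1))"
      using t0 by (intro mult_left_mono) auto
    also have "\<dots> = t * (t * A) + real n * (1 - t)"
      using t0 by (simp add: field_simps)
    finally have "t * A \<le> t * (t * A) + real n * (1 - t)" .
    then have "(1 - t) * (t * A) \<le> (1 - t) * real n" by (simp add: algebra_simps)
    then have "t * A \<le> real n" using t1 by simp
    then show False using tA An by simp
  qed
  have "(\<Sum>i=1..n. ln (x i)) \<le> (\<Sum>i=1..n. x i - 1)"
    using xpos ln_le_minus_one by (intro sum_mono) auto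
  then have lnsum: "(\<Sum>i=1..n. ln (x i)) \<le> 0" using An unfolding A_def
    by (simp add: sum_subtractf)
  have psi: "real n * ln ((\<Prod>i=1..n. S i) powr (1 / real n)) = Q"
  proof (cases "n = 0")
    case True then show ?thesis unfolding Q_def by simp
  next
    case False
    have "ln (\<Prod>i=1..n. S i) = (\<Sum>i=1..n. ln (S i))"
      using S by (intro ln_prod) (auto simp: less_imp_neq[symmetric])
    then show ?thesis unfolding Q_def using False by simp
  qed
  have "(\<Sum>i=1..n. x' i - ln (x' i)) \<le> (\<Sum>i=1..n. c * x i - ln (x i))"
  proof (intro sum_mono)
    fix i assume i: "i \<in> {1..n}"
    have "ln (x i) \<le> ln (x' i)" using xpos[OF i] x'ge[OF i] by simp
    then show "x' i - ln (x' i) \<le> c * x i - ln (x i)" using x'le[OF i] by simp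
  qed
  also have "\<dots> = c * A - (\<Sum>i=1..n. ln (x i))"
    unfolding A_def by (simp add: sum_subtractf sum_distrib_left)
  finally have main: "(\<Sum>i=1..n. x' i - ln (x' i)) \<le> c * A - (\<Sum>i=1..n. ln (x i))" .
  have e: "(\<Sum>i=1..n. x i - ln (x i)) = A - (\<Sum>i=1..n. ln (x i))"
    unfolding A_def by (simp add: sum_subtractf)
  have "(c - 1) * (\<Sum>i=1..n. ln (x i)) \<le> (c - 1) * P"
    using c1 lnsum Pnn by (meson diff_ge_0_iff_ge mult_left_mono order_trans)
  then show ?thesis unfolding Let_def psi c_def[symmetric] sc sc' e
    using main by (simp add: algebra_simps)
qed

end
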